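(* $$\sum_{k=1}^\infty\frac{(15k^2-124k-40)8^k}{(4k+1)\binom{4k}k}=30-\frac32\pi.$$ *)

theory Defs
  imports "HOL-Analysis.Analysis"
begin

end

theory Submission imports Defs "HOL-Real_Asymp.Real_Asymp" begin


lemma arctan_quot_deriv:
  fixes N M :: "real \<Rightarrow> real"
  assumes "M x \<noteq> 0" "(N has_real_derivative n') (at x)" "(M has_real_derivative m') (at x)"
  shows "((\<lambda>x. arctan (N x / M x)) has_real_derivative (n' * M x - N x * m') / (N x ^ 2 + M x ^ 2)) (at x)"
proof -
  have nz: "N x ^ 2 + M x ^ 2 \<noteq> 0" using assms(1) by (simp add: sum_power2_eq_zero_iff)
  have q: "((\<lambda>x. N x / M x) has_real_derivative (n' * M x - N x * m') / (M x * M x)) (at x)"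
    using DERIV_divide[OF assms(2,3,1)] by simp
  have "((\<lambda>x. arctan (N x / M x)) has_real_derivative inverse (1 + (N x / M x)^2) * ((n' * M x - N x * m') / (M x * M x))) (at x)"
    by (rule DERIV_chain2[OF DERIV_arctan q])
  moreover have "inverse (1 + (N x / M x)^2) * ((n' * M x - N x * m') / (M x * M x)) = (n' * M x - N x * m') / (N x ^ 2 + M x ^ 2)"
  proof -
    have "1 + (N x / M x)^2 = (N x ^ 2 + M x ^ 2) / M x ^ 2" using assms(1) by (simp add: field_simps)
    then show ?thesis using assms(1) nz by (simp add: power2_eq_square)
  qed
  ultimately show ?thesis by simp
qed

lemma dA: assumes "-4*x^2+2*x+1 \<noteq> (0::real)"
  shows "((\<lambda>x. arctan ((8*x^2-14*x+3)/(-4*x^2+2*x+1))) has_real_derivative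
           -2*(2*x^2-2*x+1) / (1 - 8*x*(1-x)^3)) (at x)"
proof -
  have e1: "(8*x^2-14*x+3)^2 + (-4*x^2+2*x+1)^2 = 10*(1 - 8*x*(1-x)^3)" by algebra
  have e2: "(16*x-14)*(-4*x^2+2*x+1) - (8*x^2-14*x+3)*(-8*x+2) = -20*(2*x^2-2*x+1)" by algebra
  have dN: "((\<lambda>x. 8*x^2-14*x+3) has_real_derivative 16*x-14) (at x)"
    by (auto intro!: derivative_eq_intros)
  have dM: "((\<lambda>x. -4*x^2+2*x+1) has_real_derivative -8*x+2) (at x)"
    by (auto intro!: derivative_eq_intros)
  note d = arctan_quot_deriv[of "\<lambda>x. -4*x^2+2*x+1", OF assms dN dM]
  have eq: "(-20*(2*x^2-2*x+1)) / (10*(1 - 8*x*(1-x)^3)) = -2*(2*x^2-2*x+1) / (1 - 8*x*(1-x)^3)"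
    by (cases "1 - 8*x*(1-x)^3 = 0") (simp_all add: field_simps)
  show ?thesis using d unfolding e1 e2 eq .
qed

lemma dB: assumes "4*x^2-6*x+1 \<noteq> (0::real)"
  shows "((\<lambda>x. arctan ((2*x-1)/(4*x^2-6*x+1))) has_real_derivative
           -2*(2*x^2-2*x+1) / (1 - 8*x*(1-x)^3)) (at x)"
proof -
  have e1: "(2*x-1)^2 + (4*x^2-6*x+1)^2 = 2*(1 - 8*x*(1-x)^3)" by algebra
  have e2: "2*(4*x^2-6*x+1) - (2*x-1)*(8*x-6) = -4*(2*x^2-2*x+1)" by algebra
  have dN: "((\<lambda>x. 2*x-1) has_real_derivative 2) (at x)"
    by (auto intro!: derivative_eq_intros)
  have dM: "((\<lambda>x. 4*x^2-6*x+1) has_real_derivative 8*x-6) (at x)"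
    by (auto intro!: derivative_eq_intros)
  note d = arctan_quot_deriv[of "\<lambda>x. 4*x^2-6*x+1", OF assms dN dM]
  have eq: "(-4*(2*x^2-2*x+1)) / (2*(1 - 8*x*(1-x)^3)) = -2*(2*x^2-2*x+1) / (1 - 8*x*(1-x)^3)"
    by (cases "1 - 8*x*(1-x)^3 = 0") (simp_all add: field_simps)
  show ?thesis using d unfolding e1 e2 eq .
qed



definition R2 :: "real \<Rightarrow> real" where
 "R2 x = 15/2 - 157*x + 845*x^2 - 1638*x^3 + 1500*x^4 - 752*x^5 + 240*x^6 - 48*x^7"

lemma dR2: "(R2 has_real_derivative (-157 + 1690*x - 4914*x^2 + 6000*x^3 - 3760*x^4 + 1440*x^5 - 336*x^6)) (at x)"
  unfolding R2_def
  by (rule derivative_eq_intros refl)+ (simp add: algebra_simps)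

lemma dD: "((\<lambda>x. 1 - 8*x*(1-x)^3) has_real_derivative (-8 + 48*x - 72*x^2 + 32*x^3)) (at x)"
  by (rule derivative_eq_intros refl)+ (simp add: algebra_simps power2_eq_square power3_eq_cube)

lemma keyid: fixes x :: real shows
 "(-157 + 1690*x - 4914*x^2 + 6000*x^3 - 3760*x^4 + 1440*x^5 - 336*x^6) * (1 - 8*x*(1-x)^3)
   - 2 * R2 x * (-8 + 48*x - 72*x^2 + 32*x^3) + 40 * (1 - 8*x*(1-x)^3)^3
   - 3 * (2*x^2-2*x+1) * (1 - 8*x*(1-x)^3)^2
  = (8*x*(1-x)^3) * (-149 + 219*(8*x*(1-x)^3) - 40*(8*x*(1-x)^3)^2)"
  unfolding R2_def by algebra



definition yv :: "real \<Rightarrow> real" where "yv x = 8*x*(1-x)^3"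

definition Gk :: "nat \<Rightarrow> real \<Rightarrow> real" where
 "Gk k x = yv x ^ k * (15*((real k)^2*(1 - yv x)^2 + 2*real k*yv x*(1-yv x) + yv x*(1+yv x))
     - 124*(real k*(1-yv x)^2 + yv x*(1-yv x)) - 40*(1-yv x)^2) / (1 - yv x)^3"

lemma yv_bounds: assumes "0 \<le> x" "x \<le> 1" shows "0 \<le> yv x" "yv x \<le> 27/32"
proof -
  show "0 \<le> yv x" using assms unfolding yv_def by simp
  have e: "27/256 - x*(1-x)^3 = (x-1/4)^2*((x-5/4)^2 + 1/8)" by algebra
  have "0 \<le> (x-1/4)^2*((x-5/4)^2 + 1/8)" by simp
  then show "yv x \<le> 27/32" unfolding yv_def using e by linarith
qed

lemma yv_ne1: assumes "0 \<le> x" "x \<le> 1" shows "yv x \<noteq> 1" "1 - yv x \<ge> 5/32"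
  using yv_bounds[OF assms] by auto

lemma tele: assumes "yv x \<noteq> 1"
  shows "(15 * real k ^ 2 - 124 * real k - 40) * yv x ^ k = Gk k x - Gk (k+1) x"
proof -
  define y where "y = yv x"
  have y1: "1 - y \<noteq> 0" using assms y_def by auto
  show ?thesis unfolding Gk_def y_def[symmetric] using y1
    by (simp add: field_simps) algebra
qed

lemma Gk_cont: "continuous_on {0..1} (Gk k)"
proof -
  have "\<forall>x\<in>{0..1}. (1 - yv x)^3 \<noteq> 0" using yv_ne1 by auto
  then show ?thesis unfolding Gk_def yv_def
    by (intro continuous_intros) auto
qed

lemma num_bound: fixes y K :: real assumes "0\<le>y" "y\<le>1" "0\<le>K"
  shows "\<bar>15*(K^2*(1-y)^2 + 2*K*y*(1-y) + y*(1+y)) - 124*(K*(1-y)^2 + y*(1-y)) - 40*(1-y)^2\<bar>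
          \<le> 15*K^2+154*K+194"
proof -
  have u0: "0 \<le> (1-y)^2" and u1: "(1-y)^2 \<le> 1" using assms by (auto simp: power_le_one)
  have v0: "0 \<le> y*(1-y)" and v1: "y*(1-y) \<le> 1" using assms by (auto simp: mult_le_one)
  have w0: "0 \<le> y*(1+y)" and w1: "y*(1+y) \<le> 2" using assms
    by (auto intro: order.trans[OF mult_mono[of y 1 "1+y" 2]])
  have a0: "0 \<le> K^2*(1-y)^2" and a1: "K^2*(1-y)^2 \<le> K^2"
    using u0 u1 by (auto simp: mult_left_le)
  have b0: "0 \<le> K*(y*(1-y))" and b1: "K*(y*(1-y)) \<le> K"
    using v0 v1 assms by (auto simp: mult_left_le)
  have c0: "0 \<le> K*(1-y)^2" and c1: "K*(1-y)^2 \<le> K"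
    using u0 u1 assms by (auto simp: mult_left_le)
  have e: "15*(K^2*(1-y)^2 + 2*K*y*(1-y) + y*(1+y)) - 124*(K*(1-y)^2 + y*(1-y)) - 40*(1-y)^2
     = 15*(K^2*(1-y)^2) + 30*(K*(y*(1-y))) + 15*(y*(1+y)) - 124*(K*(1-y)^2) - 124*(y*(1-y)) - 40*(1-y)^2"
    by algebra
  show ?thesis unfolding e abs_le_iff using a0 a1 b0 b1 c0 c1 u0 u1 v0 v1 w0 w1 assms
    by (intro conjI; linarith)
qed

lemma Gk_bound: assumes "0 \<le> x" "x \<le> 1"
  shows "\<bar>Gk k x\<bar> \<le> (27/32)^k * (32768/125) * (15*real k^2+154*real k+194)"
proof -
  define y where "y = yv x"
  have y0: "0 \<le> y" and y1: "y \<le> 27/32" using yv_bounds[OF assms] y_def by auto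
  have d: "5/32 \<le> 1 - y" using y1 by simp
  have d3: "(5/32)^3 \<le> (1-y)^3" by (rule power_mono[OF d]) simp
  have nb: "\<bar>15*((real k)^2*(1-y)^2 + 2*real k*y*(1-y) + y*(1+y)) - 124*(real k*(1-y)^2 + y*(1-y)) - 40*(1-y)^2\<bar>
          \<le> 15*real k^2+154*real k+194"
    by (rule num_bound) (use y0 y1 in auto)
  have yk: "y^k \<le> (27/32)^k" by (rule power_mono[OF y1 y0])
  have "\<bar>Gk k x\<bar> = y^k * \<bar>15*((real k)^2*(1-y)^2 + 2*real k*y*(1-y) + y*(1+y)) - 124*(real k*(1-y)^2 + y*(1-y)) - 40*(1-y)^2\<bar> / (1-y)^3"
    unfolding Gk_def y_def[symmetric] using y0 d by (simp add: abs_mult abs_divide)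
  also have "\<dots> \<le> (27/32)^k * (15*real k^2+154*real k+194) / (5/32)^3"
    by (intro frac_le mult_mono yk nb d3) (use y0 d in auto)
  also have "\<dots> = (27/32)^k * (32768/125) * (15*real k^2+154*real k+194)" by (simp add: power3_eq_cube)
  finally show ?thesis .
qed

lemma g_lim: "(\<lambda>n. integral {0..1} (Gk n)) \<longlonglongrightarrow> 0"
proof (rule Lim_null_comparison)
  show "\<forall>\<^sub>F n in sequentially. norm (integral {0..1} (Gk n)) \<le> (27/32)^n * (32768/125) * (15*real n^2+154*real n+194)"
  proof (intro always_eventually allI)
    fix n
    have "norm (integral {0..1} (Gk n)) \<le> (27/32)^n * (32768/125) * (15*real n^2+154*real n+194) * (1 - 0)"
      by (rule integral_bound) (use Gk_cont Gk_bound in auto)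
    then show "norm (integral {0..1} (Gk n)) \<le> (27/32)^n * (32768/125) * (15*real n^2+154*real n+194)" by simp
  qed
  show "(\<lambda>n. (27/32)^n * (32768/125) * (15*real n^2+154*real n+194)) \<longlonglongrightarrow> (0::real)"
    by real_asymp
qed



lemma G1_eq: assumes "yv x \<noteq> 1" shows "Gk 1 x = yv x * (-149 + 219 * yv x - 40 * yv x^2) / (1 - yv x)^3"
  unfolding Gk_def using assms by (simp add: field_simps) algebra

lemma alg: fixes D R Rp Dp c Nn :: real
  assumes "D \<noteq> 0" "Rp*D - 2*R*Dp + 40*D^3 - 3*c*D^2 = Nn"
  shows "(Rp * D^2 - R * (2 * D * Dp)) / (D^2 * D^2) + 40 + 3/2 * (-2*c/D) = Nn / D^3"
proof -
  have "Nn / D^3 = (Rp*D - 2*R*Dp + 40*D^3 - 3*c*D^2) / D^3" using assms(2) by simp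
  also have "\<dots> = (Rp * D^2 - R * (2 * D * Dp)) / (D^2 * D^2) + 40 + 3/2 * (-2*c/D)"
    using assms(1) by (simp add: field_simps power2_eq_square power3_eq_cube)
  finally show ?thesis by simp
qed

lemma dD2: "((\<lambda>x. (1 - 8*x*(1-x)^3)^2) has_real_derivative 2 * (1 - 8*x*(1-x)^3) * (-8 + 48*x - 72*x^2 + 32*x^3)) (at x)"
  by (rule DERIV_cong[OF DERIV_power[OF dD, of 2]]) (simp add: mult_ac)

lemma deriv_common:
  fixes A :: "real \<Rightarrow> real"
  assumes "yv x \<noteq> 1" and dA: "(A has_real_derivative -2*(2*x^2-2*x+1) / (1 - 8*x*(1-x)^3)) (at x)"
  shows "((\<lambda>x. R2 x / (1 - yv x)^2 + 40*x + 3/2 * A x) has_real_derivative Gk 1 x) (at x)"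
proof -
  have nz: "1 - 8*x*(1-x)^3 \<noteq> 0" using assms(1) unfolding yv_def by simp
  have nz2: "(1 - 8*x*(1-x)^3)^2 \<noteq> 0" using nz by simp
  have d1: "((\<lambda>x. R2 x / (1 - 8*x*(1-x)^3)^2) has_real_derivative
     ((-157 + 1690*x - 4914*x^2 + 6000*x^3 - 3760*x^4 + 1440*x^5 - 336*x^6) * (1 - 8*x*(1-x)^3)^2
       - R2 x * (2 * (1 - 8*x*(1-x)^3) * (-8 + 48*x - 72*x^2 + 32*x^3)))
     / ((1 - 8*x*(1-x)^3)^2 * (1 - 8*x*(1-x)^3)^2)) (at x)"
    by (rule DERIV_divide[OF dR2 dD2 nz2])
  have d2: "((\<lambda>x. (40::real)*x) has_real_derivative 40) (at x)"
    using DERIV_cmult[OF DERIV_ident, of 40] by simp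
  note d3 = DERIV_cmult[OF dA, of "3/2"]
  note d = DERIV_add[OF DERIV_add[OF d1 d2] d3]
  show ?thesis unfolding yv_def
    apply (rule DERIV_cong[OF d])
    apply (subst G1_eq[OF assms(1)])
    unfolding yv_def
    apply (rule alg[OF nz keyid])
    done
qed



lemma arctan23: "arctan 2 + arctan 3 = 3*pi/4"
proof -
  have a2: "arctan (1/2) = pi/2 - arctan 2" using arctan_inverse[of 2] by simp
  have a3: "arctan (1/3) = pi/2 - arctan 3" using arctan_inverse[of 3] by simp
  have "arctan (1/2) + arctan (1/3) = arctan ((1/2 + 1/3) / (1 - 1/2 * (1/3)))"
    by (rule arctan_add) auto
  also have "(1/2 + 1/3) / (1 - 1/2 * (1/3)) = (1::real)" by simp
  finally have "arctan (1/2) + arctan (1/3) = pi/4" using arctan_one by simp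
  then show ?thesis using a2 a3 by simp
qed

lemma int_G1: "(Gk 1 has_integral (30 - 3/2*pi)) {0..1}"
proof -
  define FL where "FL x = R2 x / (1 - yv x)^2 + 40*x + 3/2 * arctan ((8*x^2-14*x+3)/(-4*x^2+2*x+1))" for x
  define FR where "FR x = R2 x / (1 - yv x)^2 + 40*x + 3/2 * arctan ((2*x-1)/(4*x^2-6*x+1))" for x
  have L: "(Gk 1 has_integral (FL (1/2) - FL 0)) {0..1/2}"
  proof (rule fundamental_theorem_of_calculus)
    fix x :: real assume x: "x \<in> {0..1/2}"
    have y: "yv x \<noteq> 1" using yv_ne1[of x] x by auto
    have m: "-4*x^2+2*x+1 \<noteq> 0"
    proof -
      have "-4*x^2+2*x+1 = 1 + 2*x*(1-2*x)" by algebra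
      moreover have "0 \<le> 2*x*(1-2*x)" using x by auto
      ultimately show ?thesis by linarith
    qed
    have "(FL has_real_derivative Gk 1 x) (at x)"
      unfolding FL_def by (rule deriv_common[OF y dA[OF m]])
    then show "(FL has_vector_derivative Gk 1 x) (at x within {0..1/2})"
      by (simp add: has_real_derivative_iff_has_vector_derivative[symmetric] has_field_derivative_at_within)
  qed simp
  have R: "(Gk 1 has_integral (FR 1 - FR (1/2))) {1/2..1}"
  proof (rule fundamental_theorem_of_calculus)
    fix x :: real assume x: "x \<in> {1/2..1}"
    have y: "yv x \<noteq> 1" using yv_ne1[of x] x by auto
    have m: "4*x^2-6*x+1 \<noteq> 0"
    proof -
      have "4*x^2-6*x+1 = (2*x-1)*(2*x-2) - 1" by algebra
      moreover have "(2*x-1)*(2*x-2) \<le> 0" using x by (auto simp: mult_nonneg_nonpos)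
      ultimately show ?thesis by linarith
    qed
    have "(FR has_real_derivative Gk 1 x) (at x)"
      unfolding FR_def by (rule deriv_common[OF y dB[OF m]])
    then show "(FR has_vector_derivative Gk 1 x) (at x within {1/2..1})"
      by (simp add: has_real_derivative_iff_has_vector_derivative[symmetric] has_field_derivative_at_within)
  qed simp
  have C: "(Gk 1 has_integral ((FL (1/2) - FL 0) + (FR 1 - FR (1/2)))) {0..1}"
    by (rule has_integral_combine[OF _ _ L R]) auto
  have v: "(FL (1/2) - FL 0) + (FR 1 - FR (1/2)) = 30 - 3/2*pi"
  proof -
    have "(FL (1/2) - FL 0) + (FR 1 - FR (1/2)) = 30 - 3/2 * (arctan 2 + arctan 3) - 3/2 * arctan 1"
      unfolding FL_def FR_def R2_def yv_def by (simp add: arctan_minus power2_eq_square) (simp add: field_simps)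
    then show ?thesis using arctan23 arctan_one by simp
  qed
  show ?thesis using C unfolding v .
qed


lemma hi_cong: assumes "\<And>x. x \<in> S \<Longrightarrow> f x = g x" "(f has_integral i) S" shows "(g has_integral i) S"
  using has_integral_cong[of S f g i] assms by simp

lemma beta_int: assumes "k \<ge> 1"
  shows "((\<lambda>x. yv x ^ k) has_integral 8^k / ((4*real k+1) * real ((4*k) choose k))) {0..1}"
proof -
  have B: "((\<lambda>t. t powr (real k + 1 - 1) * (1 - t) powr (3*real k + 1 - 1)) has_integral Beta (real k + 1) (3*real k + 1)) {0..1}"
    by (rule has_integral_Beta_real) auto
  have eq: "t powr (real k + 1 - 1) * (1 - t) powr (3*real k + 1 - 1) = t^k * (1-t)^(3*k)" if "t \<in> {0..1}" for t
  proof -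
    have a: "t powr real k = t^k" using that assms by (cases "t = 0") (auto simp: powr_realpow)
    have b: "(1-t) powr real (3*k) = (1-t)^(3*k)"
    proof (cases "t = 1")
      case True then show ?thesis using assms by simp
    next
      case False
      then have "0 < 1 - t" using that by auto
      then show ?thesis by (rule powr_realpow)
    qed
    have b': "(1-t) powr (3*real k) = (1-t)^(3*k)" using b by simp
    show ?thesis using a b' by simp
  qed
  have B2: "((\<lambda>t. t^k * (1-t)^(3*k)) has_integral Beta (real k + 1) (3*real k + 1)) {0..1}"
    by (rule hi_cong[OF _ B]) (rule eq)
  have g1: "Gamma (real k + 1) = fact k" using Gamma_fact[of k] by (simp add: add.commute)
  have g2: "Gamma (3*real k + 1) = fact (3*k)" using Gamma_fact[of "3*k"] by (simp add: add.commute)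
  have g3: "Gamma (real k + 1 + (3*real k + 1)) = fact (4*k+1)"
    using Gamma_fact[of "4*k+1"] by (simp add: add.commute add.left_commute)
  have bin: "real ((4*k) choose k) = fact (4*k) / (fact k * fact (3*k))"
    using binomial_fact[of k "4*k"] by simp
  have f4: "(fact (4*k+1) :: real) = (4*real k+1) * fact (4*k)" by (simp add: algebra_simps)
  have Bv: "Beta (real k + 1) (3*real k + 1) = 1 / ((4*real k+1) * real ((4*k) choose k))"
    unfolding Beta_def g1 g2 g3 bin f4 by (simp add: field_simps)
  have "((\<lambda>t. 8^k * (t^k * (1-t)^(3*k))) has_integral 8^k * (1 / ((4*real k+1) * real ((4*k) choose k)))) {0..1}"
    using has_integral_mult_right[OF B2[unfolded Bv], of "8^k"] .
  moreover have "yv t ^ k = 8^k * (t^k * (1-t)^(3*k))" for t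
    unfolding yv_def by (simp add: power_mult_distrib power_mult)
  ultimately show ?thesis by simp
qed

lemma term_eq: assumes "k \<ge> 1"
  shows "(15 * real k ^ 2 - 124 * real k - 40) * 8 ^ k / ((4 * real k + 1) * real ((4 * k) choose k))
     = integral {0..1} (Gk k) - integral {0..1} (Gk (k+1))"
proof -
  have h1: "((\<lambda>x. (15 * real k ^ 2 - 124 * real k - 40) * yv x ^ k) has_integral
      (15 * real k ^ 2 - 124 * real k - 40) * (8^k / ((4*real k+1) * real ((4*k) choose k)))) {0..1}"
    by (rule has_integral_mult_right[OF beta_int[OF assms]])
  have h2: "((\<lambda>x. Gk k x - Gk (k+1) x) has_integral integral {0..1} (Gk k) - integral {0..1} (Gk (k+1))) {0..1}"
    by (intro has_integral_diff integrable_integral integrable_continuous_interval Gk_cont)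
  have h3: "((\<lambda>x. (15 * real k ^ 2 - 124 * real k - 40) * yv x ^ k) has_integral
       integral {0..1} (Gk k) - integral {0..1} (Gk (k+1))) {0..1}"
  proof -
    have eqs: "\<And>x. x \<in> {0..1} \<Longrightarrow> (15 * real k ^ 2 - 124 * real k - 40) * yv x ^ k = Gk k x - Gk (k+1) x"
      using tele yv_ne1(1) by auto
    show ?thesis by (rule hi_cong[OF _ h2]) (simp add: eqs)
  qed
  show ?thesis using has_integral_unique[OF h1 h3] by simp
qed

theorem lemma2p3:
  shows "(\<lambda>n. let k = n + 1 in
            (15 * real k ^ 2 - 124 * real k - 40) * 8 ^ k
              / ((4 * real k + 1) * real ((4 * k) choose k)))
         sums (30 - 3 / 2 * pi)"
proof -
  define f where "f n = integral {0..1} (Gk (n+1))" for n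
  have lim: "f \<longlonglongrightarrow> 0"
    unfolding f_def using g_lim LIMSEQ_Suc by (simp add: Suc_eq_plus1[symmetric]) 
  have s: "(\<lambda>n. f n - f (Suc n)) sums (f 0 - 0)" by (rule telescope_sums'[OF lim])
  have f0: "f 0 = 30 - 3/2*pi" unfolding f_def using integral_unique[OF int_G1] by simp
  have e: "(\<lambda>n. let k = n + 1 in
            (15 * real k ^ 2 - 124 * real k - 40) * 8 ^ k
              / ((4 * real k + 1) * real ((4 * k) choose k))) = (\<lambda>n. f n - f (Suc n))"
  proof (rule ext)
    fix n :: nat
    have "n+1 \<ge> 1" by simp
    from term_eq[OF this] show "(let k = n + 1 in
            (15 * real k ^ 2 - 124 * real k - 40) * 8 ^ k
              / ((4 * real k + 1) * real ((4 * k) choose k))) = f n - f (Suc n)"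
      unfolding f_def Let_def by simp
  qed
  show ?thesis unfolding e using s f0 by simp
qed

end
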